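(* Let $f^+,f^-:[0,1]\to[0,1]$ satisfy $f^+(0)=f^-(0)=0$, and let $\alpha>0$. Suppose that $ALG(uvw)\le\alpha\,LP(uvw)$ for every triangle of every sign pattern in $\{+,-\}^3$ (i.e. $(+,+,+)$, $(+,+,-)$, $(+,-,-)$, $(-,-,-)$) and every choice of edge lengths in $[0,1]$ satisfying the triangle inequalities. Then $\alpha>2.025$.
   Context: A triangle $uvw$ has pairs $uv,vw,uw$, each a positive ($+$) or negative ($-$) edge with length $x_e\in[0,1]$; triangle inequalities: each length is at most the sum of the other two. Let $p_e=f^+(x_e)$ for positive and $p_e=f^-(x_e)$ for negative edges. For a pair $(u,v)$ with third vertex $w$: $e.cost_w(u,v)=p_{uw}(1-p_{vw})+(1-p_{uw})p_{vw}$ if $(u,v)$ is positive, $(1-p_{uw})(1-p_{vw})$ if negative; $e.lp_w(u,v)=(1-p_{uw}p_{vw})x_{uv}$ if positive, $(1-p_{uw}p_{vw})(1-x_{uv})$ if negative. $ALG(uvw)=e.cost_w(u,v)+e.cost_v(w,u)+e.cost_u(v,w)$, $LP(uvw)=e.lp_w(u,v)+e.lp_v(w,u)+e.lp_u(v,w)$. (These are the per-triangle quantities of the pivot rounding algorithm for correlation clustering on complete graphs, which cuts a positive edge to the pivot with probability $f^+$ of its LP length and a negative one with probability $f^-$ of its LP length.) *)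

theory Defs
  imports Complex_Main
begin

(* Edge signs: True = positive edge (+), False = negative edge (-). *)

definition rprob :: "(real \<Rightarrow> real) \<Rightarrow> (real \<Rightarrow> real) \<Rightarrow> bool \<Rightarrow> real \<Rightarrow> real" where
  "rprob fp fm s x = (if s then fp x else fm x)"

(* e.cost_w(u,v): s = sign of (u,v), a = p_uw, b = p_vw *)
definition ecost :: "bool \<Rightarrow> real \<Rightarrow> real \<Rightarrow> real" where
  "ecost s a b = (if s then a * (1 - b) + (1 - a) * b else (1 - a) * (1 - b))"

(* e.lp_w(u,v): s = sign of (u,v), a = p_uw, b = p_vw, x = x_uv *)
definition elp :: "bool \<Rightarrow> real \<Rightarrow> real \<Rightarrow> real \<Rightarrow> real" where
  "elp s a b x = (if s then (1 - a * b) * x else (1 - a * b) * (1 - x))"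

definition ALG :: "(real \<Rightarrow> real) \<Rightarrow> (real \<Rightarrow> real) \<Rightarrow> bool \<Rightarrow> bool \<Rightarrow> bool \<Rightarrow> real \<Rightarrow> real \<Rightarrow> real \<Rightarrow> real" where
  "ALG fp fm suv svw suw xuv xvw xuw =
     (let puv = rprob fp fm suv xuv; pvw = rprob fp fm svw xvw; puw = rprob fp fm suw xuw in
      ecost suv puw pvw + ecost suw pvw puv + ecost svw puv puw)"

definition LP :: "(real \<Rightarrow> real) \<Rightarrow> (real \<Rightarrow> real) \<Rightarrow> bool \<Rightarrow> bool \<Rightarrow> bool \<Rightarrow> real \<Rightarrow> real \<Rightarrow> real \<Rightarrow> real" where
  "LP fp fm suv svw suw xuv xvw xuw =
     (let puv = rprob fp fm suv xuv; pvw = rprob fp fm svw xvw; puw = rprob fp fm suw xuw in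
      elp suv puw pvw xuv + elp suw pvw puv xuw + elp svw puv puw xvw)"

definition valid_lengths :: "real \<Rightarrow> real \<Rightarrow> real \<Rightarrow> bool" where
  "valid_lengths xuv xvw xuw \<longleftrightarrow>
     xuv \<in> {0..1} \<and> xvw \<in> {0..1} \<and> xuw \<in> {0..1} \<and>
     xuv \<le> xvw + xuw \<and> xvw \<le> xuv + xuw \<and> xuw \<le> xuv + xvw"

end

theory Submission
  imports Defs
begin

theorem theorem7:
  fixes fp fm :: "real \<Rightarrow> real" and \<alpha> :: real
  assumes "\<forall>x\<in>{0..1}. fp x \<in> {0..1}"
    and "\<forall>x\<in>{0..1}. fm x \<in> {0..1}"
    and "fp 0 = 0" and "fm 0 = 0"
    and "\<alpha> > 0"
    and "\<forall>suv svw suw xuv xvw xuw. valid_lengths xuv xvw xuw \<longrightarrow>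
           ALG fp fm suv svw suw xuv xvw xuw \<le> \<alpha> * LP fp fm suv svw suw xuv xvw xuw"
  shows "\<alpha> > 2.025"
proof (rule ccontr)
  assume "\<not> \<alpha> > 2.025"
  hence al: "\<alpha> \<le> 81/40" by simp
  have al0: "\<alpha> > 0" using assms(5) .
  have I: "ALG fp fm s1 s2 s3 x1 x2 x3 \<le> \<alpha> * LP fp fm s1 s2 s3 x1 x2 x3"
    if "valid_lengths x1 x2 x3" for s1 s2 s3 x1 x2 x3 using assms(6) that by blast
  note D = ALG_def LP_def rprob_def ecost_def elp_def valid_lengths_def Let_def
  note z = assms(3) assms(4)
  define a where "a = fp (1/2)"
  define b where "b = fp (2/5)"
  define c where "c = fp (1/10)"
  define q where "q = fm (4/5)"
  define d where "d = fm 1"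
  have a01: "0 \<le> a" "a \<le> 1" using assms(1) unfolding a_def by auto
  have b01: "0 \<le> b" "b \<le> 1" using assms(1) unfolding b_def by auto
  have c01: "0 \<le> c" "c \<le> 1" using assms(1) unfolding c_def by auto
  have q01: "0 \<le> q" "q \<le> 1" using assms(2) unfolding q_def by auto
  have T0: "(1 - d) * (1 - d) \<le> 0"
    using I[of 1 1 1 False False False] unfolding d_def by (simp add: D z)
  have T1: "2 * ((1 - d) * a) + (2 * (d * (1 - a)) + (1 - a) * (1 - a))
     \<le> \<alpha> * ((1 - d * a) / 2 + (1 - a * d) / 2)"
    using I[of "1/2" "1/2" 1 True True False] unfolding d_def a_def by (simp add: D z)
  have T2: "10 * c + 10 * (c * (1 - c)) \<le> \<alpha>"
    using I[of 0 "1/10" "1/10" True True True] unfolding c_def by (simp add: D z)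
  have T3: "c * (1 - b) + (1 - c) * b + (b * (1 - a) + (1 - b) * a) + (a * (1 - c) + (1 - a) * c)
     \<le> \<alpha> * ((1 - c * b) / 2 + (1 - b * a) / 10 + (2 - a * c * 2) / 5)"
    using I[of "1/2" "2/5" "1/10" True True True] unfolding a_def b_def c_def by (simp add: D z)
  have T5: "2 * (b * (1 - q)) + (2 * (q * (1 - b)) + (1 - b) * (1 - b))
     \<le> \<alpha> * ((2 - q * b * 2) / 5 + (1 - b * b) / 5 + (2 - b * q * 2) / 5)"
    using I[of "2/5" "2/5" "4/5" True True False] unfolding b_def q_def by (simp add: D z)
  have T6: "10 + (10 * (q * (1 - q)) - 10 * q) \<le> \<alpha> * 2"
    using I[of 0 "4/5" "4/5" True False False] unfolding q_def by (simp add: D z)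
  have d1: "d = 1"
  proof -
    have "(1 - d) * (1 - d) \<ge> 0" by simp
    hence "(1 - d) * (1 - d) = 0" using T0 by linarith
    thus ?thesis by simp
  qed
  have T1': "(1 - a) * (3 - a) \<le> \<alpha> * (1 - a)"
    using T1 unfolding d1 by (simp add: algebra_simps)
  have "\<alpha> * (1 - a) \<le> (81/40) * (1 - a)" using al a01 by (intro mult_right_mono) auto
  hence "(1 - a) * (3 - a) \<le> (81/40) * (1 - a)" using T1' by linarith
  hence "(1 - a) * (a - (39/40)) \<ge> 0" by (simp add: field_simps)
  hence aL: "a \<ge> (39/40)"
  proof (cases "a = 1")
    case False
    hence "1 - a > 0" using a01 by simp
    with \<open>(1 - a) * (a - (39/40)) \<ge> 0\<close> show ?thesis
      by (simp add: zero_le_mult_iff)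
  qed simp
  have "2 * c \<le> 2 * c * (2 - c)" using mult_left_mono[of 1 "2 - c" "2 * c"] c01 by simp
  hence cU: "c \<le> (81/400)" using T2 al by (simp add: algebra_simps)
  have LP3: "(1 - c * b) / 2 + (1 - b * a) / 10 + (2 - a * c * 2) / 5 \<ge> 0"
  proof -
    have "c * b \<le> 1" "b * a \<le> 1" "a * c \<le> 1"
      using a01 b01 c01 by (auto intro: mult_le_one)
    thus ?thesis by simp
  qed
  have T3': "c * (1 - b) + (1 - c) * b + (b * (1 - a) + (1 - b) * a) + (a * (1 - c) + (1 - a) * c)
     \<le> (81/40) * ((1 - c * b) / 2 + (1 - b * a) / 10 + (2 - a * c * 2) / 5)"
    using T3 mult_right_mono[OF al LP3] by linarith
  have bU: "b \<le> (31/100)"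
  proof (rule ccontr)
    assume "\<not> b \<le> (31/100)"
    hence "b - (31/100) \<ge> 0" by simp
    moreover have "2 - (719/400)*a - (79/80)*c \<ge> 0" using a01 cU by simp
    ultimately have h1: "(b - (31/100)) * (2 - (719/400)*a - (79/80)*c) \<ge> 0" by simp
    have h2: "c * ((847/500) - (119/100) * a) \<ge> 0" using c01 a01 by simp
    have e1: "(b - (31/100)) * (2 - (719/400)*a - (79/80)*c) = 2*b - (719/400)*(a*b) - (79/80)*(b*c) - (31/50) + (22289/40000)*a + (2449/8000)*c"
      by (simp add: field_simps)
    have e2: "c * ((847/500) - (119/100) * a) = (847/500)*c - (119/100)*(a*c)" by (simp add: field_simps)
    have e3: "2*a + 2*b + 2*c - 2*(a*b) - 2*(b*c) - 2*(a*c) \<le> (81/40) - (81/80)*(b*c) - (81/400)*(a*b) - (81/100)*(a*c)"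
    proof -
      have "c * (1 - b) + (1 - c) * b + (b * (1 - a) + (1 - b) * a) + (a * (1 - c) + (1 - a) * c)
         = 2*a + 2*b + 2*c - 2*(a*b) - 2*(b*c) - 2*(a*c)" by (simp add: field_simps)
      moreover have "(81/40) * ((1 - c * b) / 2 + (1 - b * a) / 10 + (2 - a * c * 2) / 5)
         = (81/40) - (81/80)*(b*c) - (81/400)*(a*b) - (81/100)*(a*c)" by (simp add: field_simps)
      ultimately show ?thesis using T3' by linarith
    qed
    show False using h1 h2 e1 e2 e3 aL c01 by linarith
  qed
  have h: "1 - q*q \<le> (81/200)" using T6 al by (simp add: algebra_simps)
  have qL: "q \<ge> (77/100)"
  proof (rule ccontr)
    assume "\<not> q \<ge> (77/100)"
    hence "q * q \<le> (77/100) * (77/100)" using q01 by (intro mult_mono) auto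
    thus False using h by simp
  qed
  have LP5: "(2 - q * b * 2) / 5 + (1 - b * b) / 5 + (2 - b * q * 2) / 5 \<ge> 0"
  proof -
    have "q * b \<le> 1" "b * b \<le> 1" "b * q \<le> 1"
      using q01 b01 by (auto intro: mult_le_one)
    thus ?thesis by simp
  qed
  have T5': "2 * (b * (1 - q)) + (2 * (q * (1 - b)) + (1 - b) * (1 - b))
     \<le> (81/40) * ((2 - q * b * 2) / 5 + (1 - b * b) / 5 + (2 - b * q * 2) / 5)"
    using T5 mult_right_mono[OF al LP5] by linarith
  have h1: "(q - (77/100)) * (2 - (119/50) * b) \<ge> 0" using qL bU by simp
  have h2: "((31/100) - b) * ((89/100) - b) \<ge> 0" using bU by simp
  define bq where "bq = b*q"
  define bb where "bb = b*b"
  have e1: "(q - (77/100)) * (2 - (119/50) * b) = 2*q - (119/50)*bq - (77/50) + (9163/5000)*b" by (simp add: field_simps bq_def bb_def)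
  have e2: "((31/100) - b) * ((89/100) - b) = (2759/10000) - (6/5)*b + bb" by (simp add: field_simps bq_def bb_def)
  have e3: "2*q - 4*bq + 1 + bb \<le> (81/40) - (81/50)*bq - (81/200)*bb"
  proof -
    have "2 * (b * (1 - q)) + (2 * (q * (1 - b)) + (1 - b) * (1 - b))
       = 2*q - 4*bq + 1 + bb" by (simp add: field_simps bq_def bb_def)
    moreover have "(81/40) * ((2 - q * b * 2) / 5 + (1 - b * b) / 5 + (2 - b * q * 2) / 5)
       = (81/40) - (81/50)*bq - (81/200)*bb" by (simp add: field_simps bq_def bb_def)
    ultimately show ?thesis using T5' by linarith
  qed
  have False using h1 h2 e1 e2 e3 b01 bU by linarith
  then show False .
qed

end
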